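(* Let $R$ be a commutative unital ring and equip $\mathfrak{FdgMod}_R$ with the model structure whose weak equivalences are the maps $f$ with $H^n(F^pf)$ an isomorphism for all $n\in\mathbb Z,p\in\mathbb N$, with generating cofibrations $I=\{S_R(n+1,p)\to D_R(n,p)\}$ and generating trivial cofibrations $J=\{0\to D_R(n,p)\}$. Then a morphism $p:(M,F)\to(N,F)$ is a trivial fibration if and only if, for every $k\in\mathbb N$, $F^kp:F^kM\to F^kN$ is degreewise surjective with acyclic kernel. In particular, $W\cap J\text{-inj}=I\text{-inj}$, where $W$ is the class of weak equivalences, $J$-inj the class of maps having the right lifting property with respect to $J$, and $I$-inj the class of maps having the right lifting property with respect to $I$.
   Context: $\mathfrak{FdgMod}_R$: filtered cochain complexes $(M,F)$ of $R$-modules, i.e. complexes with decreasing filtrations by subcomplexes $F^kM$ ($k\in\mathbb N$, $F^0M=M$), with filtration-preserving cochain maps. $D_R(n)$: $R$ in degrees $n,n+1$ with identity differential; $S_R(n)$: $R$ in degree $n$; $D_R(n,p)$, $S_R(n,p)$: these complexes filtered by $F^k=$ whole complex for $k\le p$ and $0$ for $k>p$; $S_R(n+1,p)\to D_R(n,p)$ the inclusion in degree $n+1$. *)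

theory Defs
  imports Main "HOL.Modules"
begin

text \<open>The complex lives inside an ambient R-module
(type 'm with scalar multiplication fc_scale); its degree-n component is the
submodule fc_mod n, its differential in degree n is fc_d n (only relevant on
fc_mod n), and F^k of the complex in degree n is fc_filt k n.\<close>

record ('r, 'm) fcomplex =
  fc_scale :: "'r \<Rightarrow> 'm \<Rightarrow> 'm"
  fc_mod   :: "int \<Rightarrow> 'm set"
  fc_d     :: "int \<Rightarrow> 'm \<Rightarrow> 'm"
  fc_filt  :: "nat \<Rightarrow> int \<Rightarrow> 'm set"

definition linear_on ::
  "('r::comm_ring_1 \<Rightarrow> 'a::ab_group_add \<Rightarrow> 'a) \<Rightarrow> ('r \<Rightarrow> 'b::ab_group_add \<Rightarrow> 'b)
    \<Rightarrow> 'a set \<Rightarrow> ('a \<Rightarrow> 'b) \<Rightarrow> bool" where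
  "linear_on s1 s2 A f \<longleftrightarrow>
     (\<forall>x\<in>A. \<forall>y\<in>A. f (x + y) = f x + f y) \<and> (\<forall>c. \<forall>x\<in>A. f (s1 c x) = s2 c (f x))"

definition submod :: "('r \<Rightarrow> 'm::ab_group_add \<Rightarrow> 'm) \<Rightarrow> 'm set \<Rightarrow> bool" where
  "submod s S \<longleftrightarrow> 0 \<in> S \<and> (\<forall>x\<in>S. \<forall>y\<in>S. x + y \<in> S) \<and> (\<forall>c. \<forall>x\<in>S. s c x \<in> S)"

definition is_fcomplex :: "('r::comm_ring_1, 'm::ab_group_add) fcomplex \<Rightarrow> bool" where
  "is_fcomplex M \<longleftrightarrow>
     module (fc_scale M) \<and>
     (\<forall>n. submod (fc_scale M) (fc_mod M n)) \<and>
     (\<forall>n. linear_on (fc_scale M) (fc_scale M) (fc_mod M n) (fc_d M n)) \<and>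
     (\<forall>n. \<forall>x\<in>fc_mod M n. fc_d M n x \<in> fc_mod M (n + 1)) \<and>
     (\<forall>n. \<forall>x\<in>fc_mod M n. fc_d M (n + 1) (fc_d M n x) = 0) \<and>
     (\<forall>n. fc_filt M 0 n = fc_mod M n) \<and>
     (\<forall>k n. submod (fc_scale M) (fc_filt M k n)) \<and>
     (\<forall>k n. fc_filt M (Suc k) n \<subseteq> fc_filt M k n) \<and>
     (\<forall>k n. \<forall>x\<in>fc_filt M k n. fc_d M n x \<in> fc_filt M k (n + 1))"

text \<open>Morphisms of filtered complexes: degreewise R-linear, commuting with the
differentials, filtration preserving.  Only the values on the components matter.\<close>

definition is_fhom ::
  "('r::comm_ring_1, 'a::ab_group_add) fcomplex \<Rightarrow> ('r, 'b::ab_group_add) fcomplex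
     \<Rightarrow> (int \<Rightarrow> 'a \<Rightarrow> 'b) \<Rightarrow> bool" where
  "is_fhom M N f \<longleftrightarrow>
     (\<forall>n. linear_on (fc_scale M) (fc_scale N) (fc_mod M n) (f n)) \<and>
     (\<forall>n. \<forall>x\<in>fc_mod M n. f n x \<in> fc_mod N n) \<and>
     (\<forall>n. \<forall>x\<in>fc_mod M n. f (n + 1) (fc_d M n x) = fc_d N n (f n x)) \<and>
     (\<forall>k n. \<forall>x\<in>fc_filt M k n. f n x \<in> fc_filt N k n)"

definition has_rlp ::
  "('r::comm_ring_1, 'c::ab_group_add) fcomplex \<Rightarrow> ('r, 'd::ab_group_add) fcomplex
     \<Rightarrow> (int \<Rightarrow> 'c \<Rightarrow> 'd)
   \<Rightarrow> ('r, 'a::ab_group_add) fcomplex \<Rightarrow> ('r, 'b::ab_group_add) fcomplex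
     \<Rightarrow> (int \<Rightarrow> 'a \<Rightarrow> 'b) \<Rightarrow> bool" where
  "has_rlp A B i M N p \<longleftrightarrow>
     (\<forall>a b. is_fhom A M a \<and> is_fhom B N b \<and>
            (\<forall>n. \<forall>x\<in>fc_mod A n. p n (a n x) = b n (i n x)) \<longrightarrow>
        (\<exists>h. is_fhom B M h \<and>
             (\<forall>n. \<forall>x\<in>fc_mod A n. h n (i n x) = a n x) \<and>
             (\<forall>n. \<forall>y\<in>fc_mod B n. p n (h n y) = b n y)))"

definition D_cpx :: "int \<Rightarrow> nat \<Rightarrow> ('r::comm_ring_1, 'r) fcomplex" where
  "D_cpx n p = \<lparr> fc_scale = (*),
     fc_mod = (\<lambda>m. if m = n \<or> m = n + 1 then UNIV else {0}),
     fc_d = (\<lambda>m x. if m = n then x else 0),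
     fc_filt = (\<lambda>k m. if k \<le> p \<and> (m = n \<or> m = n + 1) then UNIV else {0}) \<rparr>"

definition S_cpx :: "int \<Rightarrow> nat \<Rightarrow> ('r::comm_ring_1, 'r) fcomplex" where
  "S_cpx n p = \<lparr> fc_scale = (*),
     fc_mod = (\<lambda>m. if m = n then UNIV else {0}),
     fc_d = (\<lambda>m x. 0),
     fc_filt = (\<lambda>k m. if k \<le> p \<and> m = n then UNIV else {0}) \<rparr>"

definition zero_cpx :: "('r::comm_ring_1, 'r) fcomplex" where
  "zero_cpx = \<lparr> fc_scale = (*), fc_mod = (\<lambda>m. {0}), fc_d = (\<lambda>m x. 0),
     fc_filt = (\<lambda>k m. {0}) \<rparr>"

text \<open>I-inj and J-inj.  The generating maps are the inclusion S_R(n+1,p) \<rightarrow> D_R(n,p)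
(identity in degree n+1) and 0 \<rightarrow> D_R(n,p).\<close>

definition I_inj :: "('r::comm_ring_1, 'a::ab_group_add) fcomplex \<Rightarrow> ('r, 'b::ab_group_add) fcomplex
     \<Rightarrow> (int \<Rightarrow> 'a \<Rightarrow> 'b) \<Rightarrow> bool" where
  "I_inj M N f \<longleftrightarrow>
     (\<forall>n p. has_rlp (S_cpx (n + 1) p :: ('r, 'r) fcomplex) (D_cpx n p) (\<lambda>m x. x) M N f)"

definition J_inj :: "('r::comm_ring_1, 'a::ab_group_add) fcomplex \<Rightarrow> ('r, 'b::ab_group_add) fcomplex
     \<Rightarrow> (int \<Rightarrow> 'a \<Rightarrow> 'b) \<Rightarrow> bool" where
  "J_inj M N f \<longleftrightarrow>
     (\<forall>n p. has_rlp (zero_cpx :: ('r, 'r) fcomplex) (D_cpx n p) (\<lambda>m x. 0) M N f)"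

text \<open>The map
induced on H^n(F^k M) = Z/B is bijective iff it is surjective on classes and
injective on classes, spelled out with cocycles and coboundaries.\<close>

definition cocycles :: "('r, 'm::ab_group_add) fcomplex \<Rightarrow> nat \<Rightarrow> int \<Rightarrow> 'm set" where
  "cocycles M k n = {x \<in> fc_filt M k n. fc_d M n x = 0}"

definition coboundaries :: "('r, 'm) fcomplex \<Rightarrow> nat \<Rightarrow> int \<Rightarrow> 'm set" where
  "coboundaries M k n = fc_d M (n - 1) ` fc_filt M k (n - 1)"

definition H_iso :: "('r, 'a::ab_group_add) fcomplex \<Rightarrow> ('r, 'b::ab_group_add) fcomplex
     \<Rightarrow> (int \<Rightarrow> 'a \<Rightarrow> 'b) \<Rightarrow> nat \<Rightarrow> int \<Rightarrow> bool" where
  "H_iso M N f k n \<longleftrightarrow>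
     (\<forall>z\<in>cocycles N k n. \<exists>x\<in>cocycles M k n. f n x - z \<in> coboundaries N k n) \<and>
     (\<forall>x\<in>cocycles M k n. f n x \<in> coboundaries N k n \<longrightarrow> x \<in> coboundaries M k n)"

definition weak_equiv :: "('r, 'a::ab_group_add) fcomplex \<Rightarrow> ('r, 'b::ab_group_add) fcomplex
     \<Rightarrow> (int \<Rightarrow> 'a \<Rightarrow> 'b) \<Rightarrow> bool" where
  "weak_equiv M N f \<longleftrightarrow> (\<forall>n k. H_iso M N f k n)"

text \<open>In the model structure (cofibrantly generated by I, J), fibrations are J-inj,
so trivial fibrations are the weak equivalences in J-inj.\<close>

definition trivial_fibration :: "('r::comm_ring_1, 'a::ab_group_add) fcomplex
     \<Rightarrow> ('r, 'b::ab_group_add) fcomplex \<Rightarrow> (int \<Rightarrow> 'a \<Rightarrow> 'b) \<Rightarrow> bool" where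
  "trivial_fibration M N f \<longleftrightarrow> weak_equiv M N f \<and> J_inj M N f"

definition surj_acyclic_kernel :: "('r, 'a::ab_group_add) fcomplex \<Rightarrow> ('r, 'b::ab_group_add) fcomplex
     \<Rightarrow> (int \<Rightarrow> 'a \<Rightarrow> 'b) \<Rightarrow> nat \<Rightarrow> bool" where
  "surj_acyclic_kernel M N f k \<longleftrightarrow>
     (\<forall>n. f n ` fc_filt M k n = fc_filt N k n) \<and>
     (\<forall>n. \<forall>x\<in>fc_filt M k n. f n x = 0 \<and> fc_d M n x = 0 \<longrightarrow>
        (\<exists>y\<in>fc_filt M k (n - 1). f (n - 1) y = 0 \<and> fc_d M (n - 1) y = x))"

end

theory Submission
  imports Defs
begin


lemma cpx_module: "is_fcomplex M \<Longrightarrow> module (fc_scale M)"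
  by (simp add: is_fcomplex_def)

lemma submod_neg:
  assumes "module s" "submod s S" "x \<in> S" shows "- x \<in> S"
proof -
  have "s (-1) x \<in> S" using assms by (simp add: submod_def)
  moreover have "s (-1) x = - x" using module.scale_minus_left[OF assms(1), of 1 x]
    using module.scale_one[OF assms(1)] by simp
  ultimately show ?thesis by simp
qed

lemma submod_diff:
  assumes "module s" "submod s S" "x \<in> S" "y \<in> S" shows "x - y \<in> S"
  using submod_neg[OF assms(1,2,4)] assms(2,3) unfolding submod_def
  by (metis diff_conv_add_uminus)

lemma lin_zero:
  assumes "linear_on s1 s2 A f" "0 \<in> A" shows "f 0 = 0"
proof -
  have "f (0 + 0) = f 0 + f 0" using assms unfolding linear_on_def by blast
  thus ?thesis by simp
qed

lemma lin_neg:
  assumes "linear_on s1 s2 A f" "0 \<in> A" "x \<in> A" "-x \<in> A" shows "f (- x) = - f x"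
proof -
  have "f (x + - x) = f x + f (- x)" using assms unfolding linear_on_def by blast
  thus ?thesis using lin_zero[OF assms(1,2)] by (simp add: add_eq_0_iff)
qed

lemma lin_diff:
  assumes "linear_on s1 s2 A f" "0 \<in> A" "x \<in> A" "y \<in> A" "-y \<in> A" shows "f (x - y) = f x - f y"
proof -
  have "f (x + - y) = f x + f (- y)" using assms unfolding linear_on_def by blast
  thus ?thesis using lin_neg[OF assms(1,2,4,5)] by simp
qed

context
  fixes M :: "('r::comm_ring_1, 'a::ab_group_add) fcomplex"
  assumes M: "is_fcomplex M"
begin

lemma filt_mono: "k \<le> l \<Longrightarrow> fc_filt M l n \<subseteq> fc_filt M k n"
proof (induction l)
  case 0 thus ?case by simp
next
  case (Suc l)
  then show ?case using M unfolding is_fcomplex_def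
    by (metis le_SucE order_refl subset_trans)
qed

lemma filt_mod: "x \<in> fc_filt M k n \<Longrightarrow> x \<in> fc_mod M n"
  using filt_mono[of 0 k n] M unfolding is_fcomplex_def by auto

lemma filt_submod: "submod (fc_scale M) (fc_filt M k n)"
  using M unfolding is_fcomplex_def by auto

lemma filt_0: "0 \<in> fc_filt M k n"
  using filt_submod unfolding submod_def by auto

lemma filt_add: "x \<in> fc_filt M k n \<Longrightarrow> y \<in> fc_filt M k n \<Longrightarrow> x + y \<in> fc_filt M k n"
  using filt_submod unfolding submod_def by auto

lemma filt_scale: "x \<in> fc_filt M k n \<Longrightarrow> fc_scale M c x \<in> fc_filt M k n"
  using filt_submod unfolding submod_def by auto

lemma filt_neg: "x \<in> fc_filt M k n \<Longrightarrow> - x \<in> fc_filt M k n"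
  using submod_neg[OF cpx_module[OF M] filt_submod] .

lemma filt_diff: "x \<in> fc_filt M k n \<Longrightarrow> y \<in> fc_filt M k n \<Longrightarrow> x - y \<in> fc_filt M k n"
  using submod_diff[OF cpx_module[OF M] filt_submod] .

lemma mod_0: "0 \<in> fc_mod M n"
  using filt_0[of 0 n] M unfolding is_fcomplex_def by auto

lemma mod_neg: "x \<in> fc_mod M n \<Longrightarrow> - x \<in> fc_mod M n"
  using filt_neg[of x 0 n] M unfolding is_fcomplex_def by auto

lemma mod_scale: "x \<in> fc_mod M n \<Longrightarrow> fc_scale M c x \<in> fc_mod M n"
  using filt_scale[of x 0 n] M unfolding is_fcomplex_def by auto

lemma d_lin: "linear_on (fc_scale M) (fc_scale M) (fc_mod M n) (fc_d M n)"
  using M unfolding is_fcomplex_def by auto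

lemma d_0: "fc_d M n 0 = 0"
  using lin_zero[OF d_lin mod_0] .

lemma d_add: "x \<in> fc_mod M n \<Longrightarrow> y \<in> fc_mod M n \<Longrightarrow> fc_d M n (x + y) = fc_d M n x + fc_d M n y"
  using d_lin unfolding linear_on_def by auto

lemma d_scale: "x \<in> fc_mod M n \<Longrightarrow> fc_d M n (fc_scale M c x) = fc_scale M c (fc_d M n x)"
  using d_lin unfolding linear_on_def by auto

lemma d_diff: "x \<in> fc_mod M n \<Longrightarrow> y \<in> fc_mod M n \<Longrightarrow> fc_d M n (x - y) = fc_d M n x - fc_d M n y"
  using lin_diff[OF d_lin mod_0 _ _ mod_neg] by auto

lemma d_filt: "x \<in> fc_filt M k n \<Longrightarrow> fc_d M n x \<in> fc_filt M k (n + 1)"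
  using M unfolding is_fcomplex_def by auto

lemma d_filt': "x \<in> fc_filt M k (n - 1) \<Longrightarrow> fc_d M (n - 1) x \<in> fc_filt M k n"
  using d_filt[of x k "n - 1"] by simp

lemma dd: "x \<in> fc_mod M n \<Longrightarrow> fc_d M (n + 1) (fc_d M n x) = 0"
  using M unfolding is_fcomplex_def by auto

lemma dd': "x \<in> fc_mod M (n - 1) \<Longrightarrow> fc_d M n (fc_d M (n - 1) x) = 0"
  using dd[of x "n - 1"] by simp

end

context
  fixes M :: "('r::comm_ring_1, 'a::ab_group_add) fcomplex"
    and N :: "('r, 'b::ab_group_add) fcomplex"
    and f :: "int \<Rightarrow> 'a \<Rightarrow> 'b"
  assumes M: "is_fcomplex M" and N: "is_fcomplex N" and f: "is_fhom M N f"
begin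

lemma f_lin: "linear_on (fc_scale M) (fc_scale N) (fc_mod M n) (f n)"
  using f unfolding is_fhom_def by auto

lemma f_0: "f n 0 = 0"
  using lin_zero[OF f_lin mod_0[OF M]] .

lemma f_add: "x \<in> fc_mod M n \<Longrightarrow> y \<in> fc_mod M n \<Longrightarrow> f n (x + y) = f n x + f n y"
  using f_lin unfolding linear_on_def by auto

lemma f_scale: "x \<in> fc_mod M n \<Longrightarrow> f n (fc_scale M c x) = fc_scale N c (f n x)"
  using f_lin unfolding linear_on_def by auto

lemma f_diff: "x \<in> fc_mod M n \<Longrightarrow> y \<in> fc_mod M n \<Longrightarrow> f n (x - y) = f n x - f n y"
  using lin_diff[OF f_lin mod_0[OF M] _ _ mod_neg[OF M]] by auto

lemma f_filt: "x \<in> fc_filt M k n \<Longrightarrow> f n x \<in> fc_filt N k n"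
  using f unfolding is_fhom_def by auto

lemma f_d: "x \<in> fc_mod M n \<Longrightarrow> f (n + 1) (fc_d M n x) = fc_d N n (f n x)"
  using f unfolding is_fhom_def by auto

lemma f_d': "x \<in> fc_mod M (n - 1) \<Longrightarrow> f n (fc_d M (n - 1) x) = fc_d N (n - 1) (f (n - 1) x)"
  using f_d[of x "n - 1"] by simp

end



context
  fixes M :: "('r::comm_ring_1, 'a::ab_group_add) fcomplex"
    and N :: "('r, 'b::ab_group_add) fcomplex"
    and f :: "int \<Rightarrow> 'a \<Rightarrow> 'b"
  assumes M: "is_fcomplex M" and N: "is_fcomplex N" and f: "is_fhom M N f"
begin

lemma sak_surj: "surj_acyclic_kernel M N f k \<Longrightarrow> y \<in> fc_filt N k n \<Longrightarrow> \<exists>x\<in>fc_filt M k n. f n x = y"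
  unfolding surj_acyclic_kernel_def by (metis imageE)

lemma sak_intro:
  assumes "\<And>n y. y \<in> fc_filt N k n \<Longrightarrow> \<exists>x\<in>fc_filt M k n. f n x = y"
    and "\<And>n x. x\<in>fc_filt M k n \<Longrightarrow> f n x = 0 \<Longrightarrow> fc_d M n x = 0 \<Longrightarrow>
        (\<exists>y\<in>fc_filt M k (n - 1). f (n - 1) y = 0 \<and> fc_d M (n - 1) y = x)"
  shows "surj_acyclic_kernel M N f k"
  unfolding surj_acyclic_kernel_def
proof (intro conjI allI ballI impI)
  fix n show "f n ` fc_filt M k n = fc_filt N k n"
    using assms(1) f_filt[OF M N f] by (auto simp: image_iff)
next
  fix n x assume "x \<in> fc_filt M k n" "f n x = 0 \<and> fc_d M n x = 0"
  thus "\<exists>y\<in>fc_filt M k (n - 1). f (n - 1) y = 0 \<and> fc_d M (n - 1) y = x" using assms(2) by blast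
qed

lemma sak_iff:
  "(\<forall>k. surj_acyclic_kernel M N f k) \<longleftrightarrow>
   (\<forall>k n. \<forall>y\<in>fc_filt N k n. \<exists>x\<in>fc_filt M k n. f n x = y) \<and> weak_equiv M N f"
proof
  assume A: "\<forall>k. surj_acyclic_kernel M N f k"
  hence S: "\<And>k n y. y \<in> fc_filt N k n \<Longrightarrow> \<exists>x\<in>fc_filt M k n. f n x = y"
    using sak_surj by blast
  have K: "\<And>k n x. x\<in>fc_filt M k n \<Longrightarrow> f n x = 0 \<Longrightarrow> fc_d M n x = 0 \<Longrightarrow>
        (\<exists>y\<in>fc_filt M k (n - 1). f (n - 1) y = 0 \<and> fc_d M (n - 1) y = x)"
    using A unfolding surj_acyclic_kernel_def by blast
  have "weak_equiv M N f" unfolding weak_equiv_def H_iso_def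
  proof (intro allI conjI ballI impI)
    fix n k z assume z: "z \<in> cocycles N k n"
    then obtain x0 where x0: "x0 \<in> fc_filt M k n" "f n x0 = z" using S unfolding cocycles_def by blast
    have dx0: "fc_d M n x0 \<in> fc_filt M k (n + 1)" using d_filt[OF M x0(1)] .
    have "f (n + 1) (fc_d M n x0) = 0" using f_d[OF M N f filt_mod[OF M x0(1)]] x0 z
      by (simp add: cocycles_def)
    moreover have "fc_d M (n + 1) (fc_d M n x0) = 0" using dd[OF M filt_mod[OF M x0(1)]] .
    ultimately obtain w where w: "w \<in> fc_filt M k n" "f n w = 0" "fc_d M n w = fc_d M n x0"
      using K[OF dx0] by auto
    let ?x = "x0 - w"
    have "?x \<in> cocycles M k n" unfolding cocycles_def
      using filt_diff[OF M x0(1) w(1)] d_diff[OF M filt_mod[OF M x0(1)] filt_mod[OF M w(1)]] w by simp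
    moreover have "f n ?x - z = fc_d N (n - 1) 0"
      using f_diff[OF M N f filt_mod[OF M x0(1)] filt_mod[OF M w(1)]] w x0 d_0[OF N] by simp
    ultimately show "\<exists>x\<in>cocycles M k n. f n x - z \<in> coboundaries N k n"
      unfolding coboundaries_def using filt_0[OF N] by blast
  next
    fix n k x assume x: "x \<in> cocycles M k n" and fx: "f n x \<in> coboundaries N k n"
    from fx obtain u where u: "u \<in> fc_filt N k (n - 1)" "f n x = fc_d N (n - 1) u"
      unfolding coboundaries_def by blast
    obtain v where v: "v \<in> fc_filt M k (n - 1)" "f (n - 1) v = u" using S[OF u(1)] by blast
    have xm: "x \<in> fc_filt M k n" "fc_d M n x = 0" using x by (auto simp: cocycles_def)
    have dv: "fc_d M (n - 1) v \<in> fc_filt M k n" using d_filt'[OF M v(1)] .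
    have k1: "x - fc_d M (n - 1) v \<in> fc_filt M k n" using filt_diff[OF M xm(1) dv] .
    have k2: "f n (x - fc_d M (n - 1) v) = 0"
      using f_diff[OF M N f filt_mod[OF M xm(1)] filt_mod[OF M dv]] f_d'[OF M N f filt_mod[OF M v(1)]] u v by simp
    have k3: "fc_d M n (x - fc_d M (n - 1) v) = 0"
      using d_diff[OF M filt_mod[OF M xm(1)] filt_mod[OF M dv]] xm dd'[OF M filt_mod[OF M v(1)]] by simp
    obtain w where w: "w \<in> fc_filt M k (n - 1)" "fc_d M (n - 1) w = x - fc_d M (n - 1) v"
      using K[OF k1 k2 k3] by blast
    have "fc_d M (n - 1) (v + w) = x"
      using d_add[OF M filt_mod[OF M v(1)] filt_mod[OF M w(1)]] w by simp
    thus "x \<in> coboundaries M k n" unfolding coboundaries_def using filt_add[OF M v(1) w(1)] by blast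
  qed
  with S show "(\<forall>k n. \<forall>y\<in>fc_filt N k n. \<exists>x\<in>fc_filt M k n. f n x = y) \<and> weak_equiv M N f" by blast
next
  assume A: "(\<forall>k n. \<forall>y\<in>fc_filt N k n. \<exists>x\<in>fc_filt M k n. f n x = y) \<and> weak_equiv M N f"
  hence S: "\<And>k n y. y \<in> fc_filt N k n \<Longrightarrow> \<exists>x\<in>fc_filt M k n. f n x = y" by blast
  have H: "\<And>k n. H_iso M N f k n" using A unfolding weak_equiv_def by blast
  show "\<forall>k. surj_acyclic_kernel M N f k"
  proof (intro allI sak_intro)
    fix k n y assume "y \<in> fc_filt N k n" thus "\<exists>x\<in>fc_filt M k n. f n x = y" using S by blast
  next
    fix k n x assume x: "x \<in> fc_filt M k n" "f n x = 0" "fc_d M n x = 0"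
    have "x \<in> cocycles M k n" using x by (simp add: cocycles_def)
    moreover have "f n x \<in> coboundaries N k n" unfolding coboundaries_def
      using x(2) d_0[OF N] filt_0[OF N] by (metis image_eqI)
    ultimately have "x \<in> coboundaries M k n" using H[of k n] unfolding H_iso_def by blast
    then obtain v where v: "v \<in> fc_filt M k (n - 1)" "fc_d M (n - 1) v = x"
      unfolding coboundaries_def by blast
    have "f (n - 1) v \<in> cocycles N k (n - 1)" unfolding cocycles_def
      using f_filt[OF M N f v(1)] f_d'[OF M N f filt_mod[OF M v(1)]] v x by simp
    then obtain c where c: "c \<in> cocycles M k (n - 1)" "f (n - 1) c - f (n - 1) v \<in> coboundaries N k (n - 1)"
      using H[of k "n - 1"] unfolding H_iso_def by blast
    then obtain u where u: "u \<in> fc_filt N k (n - 1 - 1)" "f (n - 1) c - f (n - 1) v = fc_d N (n - 1 - 1) u"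
      unfolding coboundaries_def by blast
    obtain t where t: "t \<in> fc_filt M k (n - 1 - 1)" "f (n - 1 - 1) t = u" using S[OF u(1)] by blast
    have cm: "c \<in> fc_filt M k (n - 1)" "fc_d M (n - 1) c = 0" using c by (auto simp: cocycles_def)
    have dt: "fc_d M (n - 1 - 1) t \<in> fc_filt M k (n - 1)" using d_filt'[OF M t(1)] .
    let ?y = "v - c + fc_d M (n - 1 - 1) t"
    have y1: "?y \<in> fc_filt M k (n - 1)" using filt_add[OF M filt_diff[OF M v(1) cm(1)] dt] .
    have "f (n - 1) ?y = f (n - 1) v - f (n - 1) c + f (n - 1) (fc_d M (n - 1 - 1) t)"
      using f_add[OF M N f filt_mod[OF M filt_diff[OF M v(1) cm(1)]] filt_mod[OF M dt]]
        f_diff[OF M N f filt_mod[OF M v(1)] filt_mod[OF M cm(1)]] by simp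
    also have "\<dots> = 0" using f_d'[OF M N f filt_mod[OF M t(1)]] t u by (simp add: algebra_simps)
    finally have y2: "f (n - 1) ?y = 0" .
    have "fc_d M (n - 1) ?y = fc_d M (n - 1) v - fc_d M (n - 1) c + fc_d M (n - 1) (fc_d M (n - 1 - 1) t)"
      using d_add[OF M filt_mod[OF M filt_diff[OF M v(1) cm(1)]] filt_mod[OF M dt]]
        d_diff[OF M filt_mod[OF M v(1)] filt_mod[OF M cm(1)]] by simp
    also have "\<dots> = x" using dd'[OF M filt_mod[OF M t(1)]] v cm by simp
    finally show "\<exists>y\<in>fc_filt M k (n - 1). f (n - 1) y = 0 \<and> fc_d M (n - 1) y = x" using y1 y2 by blast
  qed
qed

definition "LIFT \<longleftrightarrow> (\<forall>p n z y. z \<in> fc_filt M p (n + 1) \<and> fc_d M (n + 1) z = 0 \<and>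
   y \<in> fc_filt N p n \<and> f (n + 1) z = fc_d N n y \<longrightarrow>
   (\<exists>x\<in>fc_filt M p n. fc_d M n x = z \<and> f n x = y))"

lemma lift_iff: "LIFT \<longleftrightarrow> (\<forall>k. surj_acyclic_kernel M N f k)"
proof
  assume L: LIFT
  have L': "\<And>p n z y. z \<in> fc_filt M p (n + 1) \<Longrightarrow> fc_d M (n + 1) z = 0 \<Longrightarrow>
   y \<in> fc_filt N p n \<Longrightarrow> f (n + 1) z = fc_d N n y \<Longrightarrow>
   (\<exists>x\<in>fc_filt M p n. fc_d M n x = z \<and> f n x = y)" using L unfolding LIFT_def by blast
  show "\<forall>k. surj_acyclic_kernel M N f k"
  proof (intro allI sak_intro)
    fix k n y assume y: "y \<in> fc_filt N k n"
    have "\<exists>x\<in>fc_filt M k (n + 1). fc_d M (n + 1) x = 0 \<and> f (n + 1) x = fc_d N n y"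
      using L'[OF filt_0[OF M] d_0[OF M] d_filt[OF N y]] f_0[OF M N f] dd[OF N filt_mod[OF N y]] by simp
    then obtain x' where "x' \<in> fc_filt M k (n + 1)" "fc_d M (n + 1) x' = 0" "f (n + 1) x' = fc_d N n y"
      by blast
    from L'[OF this(1,2) y this(3)] show "\<exists>x\<in>fc_filt M k n. f n x = y" by blast
  next
    fix k n x assume x: "x \<in> fc_filt M k n" "f n x = 0" "fc_d M n x = 0"
    have "x \<in> fc_filt M k (n - 1 + 1)" "fc_d M (n - 1 + 1) x = 0" "f (n - 1 + 1) x = fc_d N (n - 1) 0"
      using x d_0[OF N] by auto
    from L'[OF this(1,2) filt_0[OF N] this(3)] f_0[OF M N f]
    show "\<exists>y\<in>fc_filt M k (n - 1). f (n - 1) y = 0 \<and> fc_d M (n - 1) y = x" by auto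
  qed
next
  assume A: "\<forall>k. surj_acyclic_kernel M N f k"
  hence S: "\<And>k n y. y \<in> fc_filt N k n \<Longrightarrow> \<exists>x\<in>fc_filt M k n. f n x = y"
    using sak_surj by blast
  have K: "\<And>k n x. x\<in>fc_filt M k n \<Longrightarrow> f n x = 0 \<Longrightarrow> fc_d M n x = 0 \<Longrightarrow>
        (\<exists>y\<in>fc_filt M k (n - 1). f (n - 1) y = 0 \<and> fc_d M (n - 1) y = x)"
    using A unfolding surj_acyclic_kernel_def by blast
  show LIFT unfolding LIFT_def
  proof (intro allI impI, elim conjE)
    fix p n z y assume z: "z \<in> fc_filt M p (n + 1)" "fc_d M (n + 1) z = 0"
      and y: "y \<in> fc_filt N p n" and fz: "f (n + 1) z = fc_d N n y"
    obtain x0 where x0: "x0 \<in> fc_filt M p n" "f n x0 = y" using S[OF y] by blast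
    have dx0: "fc_d M n x0 \<in> fc_filt M p (n + 1)" using d_filt[OF M x0(1)] .
    have k1: "z - fc_d M n x0 \<in> fc_filt M p (n + 1)" using filt_diff[OF M z(1) dx0] .
    have k2: "f (n + 1) (z - fc_d M n x0) = 0"
      using f_diff[OF M N f filt_mod[OF M z(1)] filt_mod[OF M dx0]] f_d[OF M N f filt_mod[OF M x0(1)]] fz x0 by simp
    have k3: "fc_d M (n + 1) (z - fc_d M n x0) = 0"
      using d_diff[OF M filt_mod[OF M z(1)] filt_mod[OF M dx0]] z dd[OF M filt_mod[OF M x0(1)]] by simp
    obtain w where w: "w \<in> fc_filt M p n" "f n w = 0" "fc_d M n w = z - fc_d M n x0"
      using K[OF k1 k2 k3] by auto
    have "fc_d M n (x0 + w) = z" using d_add[OF M filt_mod[OF M x0(1)] filt_mod[OF M w(1)]] w by simp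
    moreover have "f n (x0 + w) = y" using f_add[OF M N f filt_mod[OF M x0(1)] filt_mod[OF M w(1)]] w x0 by simp
    ultimately show "\<exists>x\<in>fc_filt M p n. fc_d M n x = z \<and> f n x = y" using filt_add[OF M x0(1) w(1)] by blast
  qed
qed

end


definition hD :: "('r::comm_ring_1, 'a::ab_group_add) fcomplex \<Rightarrow> int \<Rightarrow> 'a \<Rightarrow> int \<Rightarrow> 'r \<Rightarrow> 'a" where
  "hD M n x = (\<lambda>m r. if m = n then fc_scale M r x else if m = n + 1 then fc_scale M r (fc_d M n x) else 0)"

definition hS :: "('r::comm_ring_1, 'a::ab_group_add) fcomplex \<Rightarrow> int \<Rightarrow> 'a \<Rightarrow> int \<Rightarrow> 'r \<Rightarrow> 'a" where
  "hS M n z = (\<lambda>m r. if m = n then fc_scale M r z else 0)"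

context
  fixes M :: "('r::comm_ring_1, 'a::ab_group_add) fcomplex"
  assumes M: "is_fcomplex M"
begin

lemma sc_add: "fc_scale M (a + b) x = fc_scale M a x + fc_scale M b x"
  using module.scale_left_distrib[OF cpx_module[OF M]] .
lemma sc_sc: "fc_scale M a (fc_scale M b x) = fc_scale M (a * b) x"
  using module.scale_scale[OF cpx_module[OF M]] .
lemma sc_1: "fc_scale M 1 x = x"
  using module.scale_one[OF cpx_module[OF M]] .
lemma sc_0: "fc_scale M 0 x = 0"
  using module.scale_zero_left[OF cpx_module[OF M]] .
lemma sc_0r: "fc_scale M a 0 = 0"
  using module.scale_zero_right[OF cpx_module[OF M]] .

lemma hD_hom:
  assumes x: "x \<in> fc_filt M p n"
  shows "is_fhom (D_cpx n p) M (hD M n x)"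
proof -
  have xm: "x \<in> fc_mod M n" using filt_mod[OF M x] .
  have dxm: "fc_d M n x \<in> fc_mod M (n + 1)" using filt_mod[OF M d_filt[OF M x]] .
  have fk: "\<And>k. k \<le> p \<Longrightarrow> x \<in> fc_filt M k n" using filt_mono[OF M] x by blast
  have fk': "\<And>k. k \<le> p \<Longrightarrow> fc_d M n x \<in> fc_filt M k (n + 1)" using d_filt[OF M] fk by blast
  show ?thesis unfolding is_fhom_def
  proof (intro conjI allI ballI)
    fix m show "linear_on (fc_scale (D_cpx n p)) (fc_scale M) (fc_mod (D_cpx n p) m) (hD M n x m)"
      unfolding linear_on_def hD_def D_cpx_def by (simp add: sc_add sc_sc sc_0r)
  next
    fix m and r :: 'r assume "r \<in> fc_mod (D_cpx n p) m"
    show "hD M n x m r \<in> fc_mod M m"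
      unfolding hD_def using mod_scale[OF M xm] mod_scale[OF M dxm] mod_0[OF M] by auto
  next
    fix m and r :: 'r assume r: "r \<in> fc_mod (D_cpx n p) m"
    show "hD M n x (m + 1) (fc_d (D_cpx n p) m r) = fc_d M m (hD M n x m r)"
    proof (cases "m = n")
      case True thus ?thesis unfolding hD_def D_cpx_def using d_scale[OF M xm] by simp
    next
      case F: False
      show ?thesis
      proof (cases "m = n + 1")
        case True thus ?thesis unfolding hD_def D_cpx_def
          using d_scale[OF M dxm] dd[OF M xm] sc_0r by simp
      next
        case False
        with F r have "r = 0" by (simp add: D_cpx_def split: if_splits)
        thus ?thesis using F False unfolding hD_def D_cpx_def by (simp add: sc_0 d_0[OF M])
      qed
    qed
  next
    fix k m and r :: 'r assume r: "r \<in> fc_filt (D_cpx n p) k m"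
    show "hD M n x m r \<in> fc_filt M k m"
    proof (cases "k \<le> p \<and> (m = n \<or> m = n + 1)")
      case True thus ?thesis unfolding hD_def using filt_scale[OF M fk] filt_scale[OF M fk'] by auto
    next
      case False
      with r have "r = 0" by (simp add: D_cpx_def split: if_splits)
      thus ?thesis unfolding hD_def by (simp add: sc_0 filt_0[OF M])
    qed
  qed
qed

lemma hS_hom:
  assumes z: "z \<in> fc_filt M p n" and dz: "fc_d M n z = 0"
  shows "is_fhom (S_cpx n p) M (hS M n z)"
proof -
  have zm: "z \<in> fc_mod M n" using filt_mod[OF M z] .
  have fk: "\<And>k. k \<le> p \<Longrightarrow> z \<in> fc_filt M k n" using filt_mono[OF M] z by blast
  show ?thesis unfolding is_fhom_def
  proof (intro conjI allI ballI)
    fix m show "linear_on (fc_scale (S_cpx n p)) (fc_scale M) (fc_mod (S_cpx n p) m) (hS M n z m)"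
      unfolding linear_on_def hS_def S_cpx_def by (simp add: sc_add sc_sc sc_0r)
  next
    fix m and r :: 'r assume "r \<in> fc_mod (S_cpx n p) m"
    show "hS M n z m r \<in> fc_mod M m"
      unfolding hS_def using mod_scale[OF M zm] mod_0[OF M] by auto
  next
    fix m and r :: 'r assume r: "r \<in> fc_mod (S_cpx n p) m"
    show "hS M n z (m + 1) (fc_d (S_cpx n p) m r) = fc_d M m (hS M n z m r)"
    proof (cases "m = n")
      case True thus ?thesis unfolding hS_def S_cpx_def using d_scale[OF M zm] dz sc_0r by simp
    next
      case False
      with r have "r = 0" by (simp add: S_cpx_def split: if_splits)
      thus ?thesis using False unfolding hS_def S_cpx_def by (simp add: sc_0 d_0[OF M])
    qed
  next
    fix k m and r :: 'r assume r: "r \<in> fc_filt (S_cpx n p) k m"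
    show "hS M n z m r \<in> fc_filt M k m"
    proof (cases "k \<le> p \<and> m = n")
      case True thus ?thesis unfolding hS_def using filt_scale[OF M fk] by auto
    next
      case False
      with r have "r = 0" by (simp add: S_cpx_def split: if_splits)
      thus ?thesis unfolding hS_def by (simp add: sc_0 filt_0[OF M])
    qed
  qed
qed

lemma zero_hom: "is_fhom zero_cpx M (\<lambda>m r. 0)"
  unfolding is_fhom_def linear_on_def zero_cpx_def using mod_0[OF M] filt_0[OF M] d_0[OF M] sc_0r
  by simp

lemma hom_lin0: assumes "is_fhom A M b" "0 \<in> fc_mod A m" shows "b m 0 = 0"
proof -
  have "linear_on (fc_scale A) (fc_scale M) (fc_mod A m) (b m)" using assms(1) unfolding is_fhom_def by blast
  thus ?thesis using assms(2) by (rule lin_zero)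
qed

lemma D_hom_facts:
  assumes b: "is_fhom (D_cpx n p) M b"
  shows "b n 1 \<in> fc_filt M p n"
    and "\<And>r. b n r = fc_scale M r (b n 1)"
    and "\<And>r. b (n + 1) r = fc_scale M r (fc_d M n (b n 1))"
    and "\<And>m. b m 0 = 0"
proof -
  have "\<forall>k n'. \<forall>x\<in>fc_filt (D_cpx n p) k n'. b n' x \<in> fc_filt M k n'"
    using b unfolding is_fhom_def by blast
  hence "(1::'r) \<in> fc_filt (D_cpx n p) p n \<Longrightarrow> b n 1 \<in> fc_filt M p n" by blast
  thus f1: "b n 1 \<in> fc_filt M p n" by (simp add: D_cpx_def)
  have l: "\<And>m. linear_on (*) (fc_scale M) (fc_mod (D_cpx n p) m) (b m)"
    using b unfolding is_fhom_def by (simp add: D_cpx_def)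
  show bn: "\<And>r. b n r = fc_scale M r (b n 1)"
    proof -
    fix r
    have "\<forall>c. \<forall>x\<in>UNIV. b n (c * x) = fc_scale M c (b n x)"
      using l[of n] unfolding linear_on_def D_cpx_def by simp
    hence "b n (r * 1) = fc_scale M r (b n 1)" by blast
    thus "b n r = fc_scale M r (b n 1)" by simp
  qed
  have "\<forall>x\<in>fc_mod (D_cpx n p) n. b (n+1) (fc_d (D_cpx n p) n x) = fc_d M n (b n x)"
    using b unfolding is_fhom_def by blast
  hence "b (n + 1) r = fc_d M n (b n r)" for r by (simp add: D_cpx_def)
  moreover have "b n 1 \<in> fc_mod M n" using filt_mod[OF M f1] .
  ultimately show "\<And>r. b (n + 1) r = fc_scale M r (fc_d M n (b n 1))"
  proof -
    fix r
    have "b (n + 1) r = fc_d M n (b n r)" by fact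
    also have "\<dots> = fc_d M n (fc_scale M r (b n 1))" by (subst bn[of r], rule refl)
    also have "\<dots> = fc_scale M r (fc_d M n (b n 1))" by (rule d_scale[OF M \<open>b n 1 \<in> fc_mod M n\<close>])
    finally show "b (n + 1) r = fc_scale M r (fc_d M n (b n 1))" .
  qed
  show "\<And>m. b m 0 = 0" using hom_lin0[OF b] by (simp add: D_cpx_def)
qed

lemma S_hom_facts:
  assumes a: "is_fhom (S_cpx n p) M a"
  shows "a n 1 \<in> fc_filt M p n"
    and "fc_d M n (a n 1) = 0"
    and "\<And>r. a n r = fc_scale M r (a n 1)"
    and "\<And>m. a m 0 = 0"
proof -
  have "\<forall>k n'. \<forall>x\<in>fc_filt (S_cpx n p) k n'. a n' x \<in> fc_filt M k n'"
    using a unfolding is_fhom_def by blast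
  hence "(1::'r) \<in> fc_filt (S_cpx n p) p n \<Longrightarrow> a n 1 \<in> fc_filt M p n" by blast
  thus f1: "a n 1 \<in> fc_filt M p n" by (simp add: S_cpx_def)
  have l: "\<And>m. linear_on (*) (fc_scale M) (fc_mod (S_cpx n p) m) (a m)"
    using a unfolding is_fhom_def by (simp add: S_cpx_def)
  show "\<And>r. a n r = fc_scale M r (a n 1)"
    proof -
    fix r
    have "\<forall>c. \<forall>x\<in>UNIV. a n (c * x) = fc_scale M c (a n x)"
      using l[of n] unfolding linear_on_def S_cpx_def by simp
    hence "a n (r * 1) = fc_scale M r (a n 1)" by blast
    thus "a n r = fc_scale M r (a n 1)" by simp
  qed
  show a0: "\<And>m. a m 0 = 0" using hom_lin0[OF a] by (simp add: S_cpx_def)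
  have "\<forall>x\<in>fc_mod (S_cpx n p) n. a (n+1) (fc_d (S_cpx n p) n x) = fc_d M n (a n x)"
    using a unfolding is_fhom_def by blast
  hence "a (n + 1) (fc_d (S_cpx n p) n 1) = fc_d M n (a n 1)" by (simp add: S_cpx_def)
  thus "fc_d M n (a n 1) = 0" using a0 by (simp add: S_cpx_def)
qed

lemma zero_hom_facts: assumes "is_fhom zero_cpx M a" shows "a m 0 = 0"
  by (rule hom_lin0[OF assms]) (simp add: zero_cpx_def)

end


context
  fixes M :: "('r::comm_ring_1, 'a::ab_group_add) fcomplex"
    and N :: "('r, 'b::ab_group_add) fcomplex"
    and f :: "int \<Rightarrow> 'a \<Rightarrow> 'b"
  assumes M: "is_fcomplex M" and N: "is_fcomplex N" and f: "is_fhom M N f"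
begin

lemma hD_comm:
  assumes x: "x \<in> fc_filt M p n" and b: "is_fhom (D_cpx n p) N b" and fx: "f n x = b n 1"
  shows "\<forall>m. \<forall>r\<in>fc_mod (D_cpx n p) m. f m (hD M n x m r) = b m r"
proof (intro allI ballI)
  fix m and r :: 'r assume r: "r \<in> fc_mod (D_cpx n p) m"
  have xm: "x \<in> fc_mod M n" using filt_mod[OF M x] .
  have dxm: "fc_d M n x \<in> fc_mod M (n + 1)" using filt_mod[OF M d_filt[OF M x]] .
  show "f m (hD M n x m r) = b m r"
  proof (cases "m = n")
    case True
    have "f n (fc_scale M r x) = fc_scale N r (f n x)" using f_scale[OF M N f xm] .
    also have "\<dots> = b n r" using D_hom_facts(2)[OF N b, of r] fx by simp
    finally show ?thesis using True by (simp add: hD_def)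
  next
    case F: False
    show ?thesis
    proof (cases "m = n + 1")
      case True
      have "f (n + 1) (fc_scale M r (fc_d M n x)) = fc_scale N r (f (n + 1) (fc_d M n x))"
        using f_scale[OF M N f dxm] .
      also have "\<dots> = fc_scale N r (fc_d N n (b n 1))" using f_d[OF M N f xm] fx by simp
      also have "\<dots> = b (n + 1) r" using D_hom_facts(3)[OF N b, of r] by simp
      finally show ?thesis using True by (simp add: hD_def)
    next
      case False
      with F r have "r = 0" by (simp add: D_cpx_def split: if_splits)
      thus ?thesis using F False D_hom_facts(4)[OF N b] f_0[OF M N f] by (simp add: hD_def)
    qed
  qed
qed

lemma J_iff: "J_inj M N f \<longleftrightarrow> (\<forall>k n. \<forall>y\<in>fc_filt N k n. \<exists>x\<in>fc_filt M k n. f n x = y)"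
proof
  assume J: "J_inj M N f"
  show "\<forall>k n. \<forall>y\<in>fc_filt N k n. \<exists>x\<in>fc_filt M k n. f n x = y"
  proof (intro allI ballI)
    fix k n y assume y: "y \<in> fc_filt N k n"
    have R: "has_rlp (zero_cpx :: ('r, 'r) fcomplex) (D_cpx n k) (\<lambda>m x. 0) M N f"
      using J unfolding J_inj_def by blast
    have ha: "is_fhom (zero_cpx :: ('r, 'r) fcomplex) M (\<lambda>m r. 0)" using zero_hom[OF M] .
    have hb: "is_fhom (D_cpx n k) N (hD N n y)" using hD_hom[OF N y] .
    have cm: "\<forall>m. \<forall>x\<in>fc_mod (zero_cpx :: ('r, 'r) fcomplex) m. f m ((\<lambda>m r. 0) m x) = hD N n y m ((\<lambda>m x. 0) m x)"
      using f_0[OF M N f] sc_0[OF N] by (simp add: hD_def)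
    obtain h where h: "is_fhom (D_cpx n k) M h" "\<forall>m. \<forall>r\<in>fc_mod (D_cpx n k) m. f m (h m r) = hD N n y m r"
      using R ha hb cm unfolding has_rlp_def by blast
    have "f n (h n 1) = hD N n y n 1" using h(2) by (simp add: D_cpx_def)
    hence "f n (h n 1) = y" by (simp add: hD_def sc_1[OF N])
    thus "\<exists>x\<in>fc_filt M k n. f n x = y" using D_hom_facts(1)[OF M h(1)] by blast
  qed
next
  assume S: "\<forall>k n. \<forall>y\<in>fc_filt N k n. \<exists>x\<in>fc_filt M k n. f n x = y"
  show "J_inj M N f" unfolding J_inj_def has_rlp_def
  proof (intro allI impI, elim conjE)
    fix n p and a :: "int \<Rightarrow> 'r \<Rightarrow> 'a" and b :: "int \<Rightarrow> 'r \<Rightarrow> 'b"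
    assume a: "is_fhom (zero_cpx :: ('r, 'r) fcomplex) M a" and b: "is_fhom (D_cpx n p) N b"
    obtain x where x: "x \<in> fc_filt M p n" "f n x = b n 1" using S D_hom_facts(1)[OF N b] by blast
    show "\<exists>h. is_fhom (D_cpx n p) M h \<and>
             (\<forall>m. \<forall>xa\<in>fc_mod (zero_cpx :: ('r, 'r) fcomplex) m. h m ((\<lambda>m x. 0) m xa) = a m xa) \<and>
             (\<forall>m. \<forall>y\<in>fc_mod (D_cpx n p) m. f m (h m y) = b m y)"
    proof (intro exI conjI)
      show "is_fhom (D_cpx n p) M (hD M n x)" using hD_hom[OF M x(1)] .
      show "\<forall>m. \<forall>xa\<in>fc_mod (zero_cpx :: ('r, 'r) fcomplex) m. hD M n x m ((\<lambda>m x. 0) m xa) = a m xa"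
        using zero_hom_facts[OF M a] sc_0[OF M] by (simp add: hD_def zero_cpx_def)
      show "\<forall>m. \<forall>y\<in>fc_mod (D_cpx n p) m. f m (hD M n x m y) = b m y"
        using hD_comm[OF x(1) b x(2)] .
    qed
  qed
qed

lemma I_iff: "I_inj M N f \<longleftrightarrow> LIFT M N f"
proof
  assume I: "I_inj M N f"
  show "LIFT M N f" unfolding LIFT_def[OF M N f]
  proof (intro allI impI, elim conjE)
    fix p n z y assume z: "z \<in> fc_filt M p (n + 1)" "fc_d M (n + 1) z = 0"
      and y: "y \<in> fc_filt N p n" and fz: "f (n + 1) z = fc_d N n y"
    have R: "has_rlp (S_cpx (n + 1) p :: ('r, 'r) fcomplex) (D_cpx n p) (\<lambda>m x. x) M N f"
      using I unfolding I_inj_def by blast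
    have ha: "is_fhom (S_cpx (n + 1) p) M (hS M (n + 1) z)" using hS_hom[OF M z] .
    have hb: "is_fhom (D_cpx n p) N (hD N n y)" using hD_hom[OF N y] .
    have zm: "z \<in> fc_mod M (n + 1)" using filt_mod[OF M z(1)] .
    have cm: "\<forall>m. \<forall>r\<in>fc_mod (S_cpx (n + 1) p) m. f m (hS M (n + 1) z m r) = hD N n y m ((\<lambda>m x. x) m r)"
    proof (intro allI ballI)
      fix m and r :: 'r assume r: "r \<in> fc_mod (S_cpx (n + 1) p) m"
      show "f m (hS M (n + 1) z m r) = hD N n y m ((\<lambda>m x. x) m r)"
      proof (cases "m = n + 1")
        case True thus ?thesis using f_scale[OF M N f zm] fz by (simp add: hS_def hD_def)
      next
        case False
        with r have "r = 0" by (simp add: S_cpx_def split: if_splits)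
        thus ?thesis using False f_0[OF M N f] sc_0[OF N] sc_0[OF M] by (simp add: hS_def hD_def)
      qed
    qed
    obtain h where h: "is_fhom (D_cpx n p) M h"
      "\<forall>m. \<forall>r\<in>fc_mod (S_cpx (n + 1) p) m. h m r = hS M (n + 1) z m r"
      "\<forall>m. \<forall>r\<in>fc_mod (D_cpx n p) m. f m (h m r) = hD N n y m r"
      using R ha hb cm unfolding has_rlp_def by blast
    have "h (n + 1) 1 = z" using h(2) sc_1[OF M] by (simp add: S_cpx_def hS_def)
    moreover have "h (n + 1) 1 = fc_d M n (h n 1)" using D_hom_facts(3)[OF M h(1), of 1] sc_1[OF M] by simp
    moreover have "f n (h n 1) = y" using h(3) sc_1[OF N] by (simp add: D_cpx_def hD_def)
    ultimately show "\<exists>x\<in>fc_filt M p n. fc_d M n x = z \<and> f n x = y"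
      using D_hom_facts(1)[OF M h(1)] by metis
  qed
next
  assume L: "LIFT M N f"
  show "I_inj M N f" unfolding I_inj_def has_rlp_def
  proof (intro allI impI, elim conjE)
    fix n p and a :: "int \<Rightarrow> 'r \<Rightarrow> 'a" and b :: "int \<Rightarrow> 'r \<Rightarrow> 'b"
    assume a: "is_fhom (S_cpx (n + 1) p :: ('r, 'r) fcomplex) M a" and b: "is_fhom (D_cpx n p) N b"
      and cm: "\<forall>m. \<forall>x\<in>fc_mod (S_cpx (n + 1) p :: ('r, 'r) fcomplex) m. f m (a m x) = b m ((\<lambda>m x. x) m x)"
    have z: "a (n + 1) 1 \<in> fc_filt M p (n + 1)" "fc_d M (n + 1) (a (n + 1) 1) = 0"
      using S_hom_facts(1,2)[OF M a] by auto
    have y: "b n 1 \<in> fc_filt N p n" using D_hom_facts(1)[OF N b] .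
    have "f (n + 1) (a (n + 1) 1) = b (n + 1) 1" using cm by (simp add: S_cpx_def)
    also have "\<dots> = fc_d N n (b n 1)" using D_hom_facts(3)[OF N b, of 1] sc_1[OF N] by simp
    finally have fz: "f (n + 1) (a (n + 1) 1) = fc_d N n (b n 1)" .
    obtain x where x: "x \<in> fc_filt M p n" "fc_d M n x = a (n + 1) 1" "f n x = b n 1"
      using L z y fz unfolding LIFT_def[OF M N f] by blast
    show "\<exists>h. is_fhom (D_cpx n p) M h \<and>
             (\<forall>m. \<forall>xa\<in>fc_mod (S_cpx (n + 1) p :: ('r, 'r) fcomplex) m. h m ((\<lambda>m x. x) m xa) = a m xa) \<and>
             (\<forall>m. \<forall>y\<in>fc_mod (D_cpx n p) m. f m (h m y) = b m y)"
    proof (intro exI conjI)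
      show "is_fhom (D_cpx n p) M (hD M n x)" using hD_hom[OF M x(1)] .
      show "\<forall>m. \<forall>xa\<in>fc_mod (S_cpx (n + 1) p :: ('r, 'r) fcomplex) m. hD M n x m ((\<lambda>m x. x) m xa) = a m xa"
      proof (intro allI ballI)
        fix m and r :: 'r assume r: "r \<in> fc_mod (S_cpx (n + 1) p :: ('r, 'r) fcomplex) m"
        show "hD M n x m ((\<lambda>m x. x) m r) = a m r"
        proof (cases "m = n + 1")
          case True thus ?thesis using x(2) S_hom_facts(3)[OF M a, of r] by (simp add: hD_def)
        next
          case False
          with r have "r = 0" by (simp add: S_cpx_def split: if_splits)
          thus ?thesis using False S_hom_facts(4)[OF M a] sc_0[OF M] by (simp add: hD_def)
        qed
      qed
      show "\<forall>m. \<forall>y\<in>fc_mod (D_cpx n p) m. f m (hD M n x m y) = b m y"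
        using hD_comm[OF x(1) b x(3)] .
    qed
  qed
qed

end

theorem proposition1p20:
  fixes M :: "('r::comm_ring_1, 'a::ab_group_add) fcomplex"
    and N :: "('r, 'b::ab_group_add) fcomplex"
    and f :: "int \<Rightarrow> 'a \<Rightarrow> 'b"
  assumes "is_fcomplex M" and "is_fcomplex N" and "is_fhom M N f"
  shows "(trivial_fibration M N f \<longleftrightarrow> (\<forall>k. surj_acyclic_kernel M N f k))
     \<and> (weak_equiv M N f \<and> J_inj M N f \<longleftrightarrow> I_inj M N f)"
  using sak_iff[OF assms] lift_iff[OF assms] J_iff[OF assms] I_iff[OF assms]
  unfolding trivial_fibration_def by blast


end
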